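(* Let $p$ be an odd prime and let $m,k$ be positive integers such that $m/\gcd(m,k)$ is odd. For $x,y\in\mathbb{F}_{p^m}$ put $x\circ_k y=x^{p^k}y+y^{p^k}x$. Let $\alpha$ be a non-square element of $\mathbb{F}_{p^m}$ and $\sigma$ a field automorphism of $\mathbb{F}_{p^m}$. For $(a,b),(c,d)\in\mathbb{F}_{p^m}^2$ define $$(a,b)*(c,d)=\big(a\circ_k c+\alpha\,\sigma(b\circ_k d),\ ad+bc\big).$$ Then $(\mathbb{F}_{p^m}^2,+,* )$ (with componentwise addition, i.e. the additive group of $\mathbb{F}_{p^{2m}}$) is a presemifield.
   Context: A (finite) presemifield is a finite set with an addition making it an abelian group and a multiplication $*$ satisfying both distributive laws $(a+b)*c=a*c+b*c$, $a*(b+c)=a*b+a*c$, and such that $x*y=0$ implies $x=0$ or $y=0$ (equivalently, for nonzero elements the left and right multiplication maps are bijective); a multiplicative identity is not required. *)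

theory Defs
  imports Main "HOL-Library.Product_Plus" "HOL-Computational_Algebra.Primes"
begin

definition presemifield :: "('b::ab_group_add \<Rightarrow> 'b \<Rightarrow> 'b) \<Rightarrow> bool" where
  "presemifield mul \<longleftrightarrow> finite (UNIV :: 'b set) \<and>
     (\<forall>a b c. mul (a + b) c = mul a c + mul b c) \<and>
     (\<forall>a b c. mul a (b + c) = mul a b + mul a c) \<and>
     (\<forall>x y. mul x y = 0 \<longrightarrow> x = 0 \<or> y = 0)"

definition field_automorphism :: "('a::field \<Rightarrow> 'a) \<Rightarrow> bool" where
  "field_automorphism \<sigma> \<longleftrightarrow> bij \<sigma> \<and>
     (\<forall>x y. \<sigma> (x + y) = \<sigma> x + \<sigma> y) \<and> (\<forall>x y. \<sigma> (x * y) = \<sigma> x * \<sigma> y)"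

definition circ_k :: "nat \<Rightarrow> nat \<Rightarrow> 'a::field \<Rightarrow> 'a \<Rightarrow> 'a" where
  "circ_k p k x y = x ^ (p ^ k) * y + y ^ (p ^ k) * x"

definition star_mult :: "nat \<Rightarrow> nat \<Rightarrow> 'a::field \<Rightarrow> ('a \<Rightarrow> 'a) \<Rightarrow> 'a \<times> 'a \<Rightarrow> 'a \<times> 'a \<Rightarrow> 'a \<times> 'a" where
  "star_mult p k \<alpha> \<sigma> u v =
     (case u of (a, b) \<Rightarrow> case v of (c, d) \<Rightarrow>
       (circ_k p k a c + \<alpha> * \<sigma> (circ_k p k b d), a * d + b * c))"

end

theory Submission imports Defs "HOL-Number_Theory.Residues" begin

lemma char_eq:
  fixes p m :: nat
  assumes "prime p" "m > 0" "card (UNIV :: 'a::{field,finite} set) = p ^ m"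
  shows "CHAR('a) = p"
proof -
  have pos: "CHAR('a) > 0" by (rule finite_imp_CHAR_pos) simp
  have pr: "prime CHAR('a)" using prime_CHAR_semidom[OF pos] .
  have "CHAR('a) dvd p ^ m" using CHAR_dvd_CARD[where 'a='a] assms(3) by simp
  hence "CHAR('a) dvd p" using pr prime_dvd_power by blast
  thus ?thesis using pr assms(1) primes_dvd_imp_eq by blast
qed

lemma pow_card_same:
  fixes x :: "'a :: {field,finite}"
  shows "x ^ card (UNIV :: 'a set) = x"
proof (cases "x = 0")
  case False
  have "x * (\<Prod>y\<in>UNIV-{0}. x * y) = x * x ^ (card (UNIV :: 'a set) - 1) * \<Prod>(UNIV-{0})"
    by (simp add: prod.distrib mult_ac)
  also have "x * x ^ (card (UNIV :: 'a set) - 1) = x ^ Suc (card (UNIV :: 'a set) - 1)"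
    by (subst power_Suc) auto
  also have "Suc (card (UNIV :: 'a set) - 1) = card (UNIV :: 'a set)"
    using finite_UNIV_card_ge_0[where ?'a = 'a] by simp
  also have "(\<Prod>y\<in>UNIV-{0}. x * y) = (\<Prod>y\<in>UNIV-{0}. y)"
    by (rule prod.reindex_bij_witness[of _ "\<lambda>y. y / x" "\<lambda>y. x * y"]) (use False in auto)
  finally show ?thesis
    by simp
qed (use finite_UNIV_card_ge_0[where ?'a = 'a] in auto)

lemma pow_card_pow_same:
  fixes x :: "'a :: {field,finite}"
  shows "x ^ (card (UNIV :: 'a set) ^ n) = x"
  by (induction n) (simp_all add: pow_card_same power_mult)

lemma L0:
  fixes z :: "'a :: {field,finite}" and p m k :: nat
  assumes "prime p" "odd p" "m > 0" "card (UNIV :: 'a set) = p ^ m"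
    "odd (m div gcd m k)" "z ^ (p ^ k) = - z"
  shows "z = 0"
proof -
  define q where "q = p ^ k"
  have qodd: "odd q" using assms(2) by (simp add: q_def)
  have step: "z ^ (q ^ j) = (-1) ^ j * z" for j
  proof (induction j)
    case (Suc j)
    have "z ^ (q ^ Suc j) = (z ^ (q ^ j)) ^ q" by (metis power_Suc2 power_mult)
    also have "\<dots> = ((-1) ^ j) ^ q * z ^ q" by (simp add: Suc power_mult_distrib)
    also have "((-1::'a) ^ j) ^ q = (-1) ^ j"
      by (metis power_mult mult.commute power_minus_odd power_one qodd)
    finally show ?case using assms(6) by (simp add: q_def)
  qed simp
  define g where "g = gcd m k"
  define t where "t = m div g"
  have "k * t = m * (k div g)"
    unfolding t_def g_def by (metis dvd_div_mult gcd_dvd1 gcd_dvd2 mult.commute div_mult_swap)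
  hence "q ^ t = (p ^ m) ^ (k div g)" by (metis q_def power_mult)
  hence "z ^ (q ^ t) = z" using pow_card_pow_same[of z "k div g"] assms(4) by simp
  with step[of t] have "(-1) ^ t * z = z" by simp
  moreover have "odd t" using assms(5) by (simp add: t_def g_def)
  ultimately have "- z = z" by simp
  hence "of_nat 2 * z = 0" by (simp add: algebra_simps)
  moreover have "of_nat 2 \<noteq> (0::'a)"
  proof
    assume "of_nat 2 = (0::'a)"
    hence "CHAR('a) dvd 2" by (simp only: of_nat_eq_0_iff_char_dvd)
    hence "p dvd 2" using char_eq[OF assms(1,3,4)] by simp
    hence "p \<le> 2" by (rule dvd_imp_le) simp
    moreover have "p \<ge> 2" using assms(1) prime_ge_2_nat by blast
    ultimately show False using assms(2) by simp
  qed
  ultimately show ?thesis by simp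
qed

lemma nonsq_mult:
  fixes u v :: "'a :: {field,finite}"
  assumes u: "\<not> (\<exists>y. u = y ^ 2)" and v: "\<not> (\<exists>y. v = y ^ 2)"
  shows "\<exists>t. u * v = t ^ 2"
proof (rule ccontr)
  assume nt: "\<not> (\<exists>t. u * v = t ^ 2)"
  define Q where "Q = (\<lambda>y. y ^ 2) ` (UNIV - {0::'a})"
  have u0: "u \<noteq> 0" using u by (metis power_zero_numeral)
  have fib: "card {y. y ^ 2 = z} \<le> 2" if zQ: "z \<in> Q" for z
  proof -
    obtain w where w: "z = w ^ 2" using zQ Q_def by auto
    have "{y. y ^ 2 = z} \<subseteq> {w, -w}"
    proof
      fix y assume "y \<in> {y. y ^ 2 = z}"
      hence "(y - w) * (y + w) = 0" using w by (simp add: algebra_simps power2_eq_square)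
      thus "y \<in> {w, -w}" by (auto simp: eq_neg_iff_add_eq_0)
    qed
    hence "card {y. y ^ 2 = z} \<le> card {w, -w}" by (intro card_mono) auto
    also have "\<dots> \<le> 2" by (simp add: card_insert_if)
    finally show ?thesis .
  qed
  have "UNIV - {0} \<subseteq> (\<Union>z\<in>Q. {y. y ^ 2 = z})" unfolding Q_def by auto
  hence "card (UNIV - {0::'a}) \<le> card (\<Union>z\<in>Q. {y. y ^ 2 = z})" by (intro card_mono) auto
  also have "\<dots> \<le> (\<Sum>z\<in>Q. card {y. y ^ 2 = z})" by (rule card_UN_le) simp
  also have "\<dots> \<le> (\<Sum>z\<in>Q. 2)" by (rule sum_mono) (rule fib)
  finally have c1: "card (UNIV - {0::'a}) \<le> 2 * card Q" by simp
  have disj1: "(\<lambda>x. u * x) ` Q \<inter> Q = {}"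
  proof (rule ccontr)
    assume "(\<lambda>x. u * x) ` Q \<inter> Q \<noteq> {}"
    then obtain a b where "a \<noteq> 0" "b \<noteq> 0" "u * a ^ 2 = b ^ 2" unfolding Q_def by auto
    hence "u = (b / a) ^ 2" by (simp add: field_simps power2_eq_square)
    thus False using u by blast
  qed
  have vnot: "v \<notin> (\<lambda>x. u * x) ` Q \<union> Q"
  proof
    assume "v \<in> (\<lambda>x. u * x) ` Q \<union> Q"
    then show False
    proof
      assume "v \<in> (\<lambda>x. u * x) ` Q"
      then obtain a where "v = u * a ^ 2" unfolding Q_def by auto
      hence "u * v = (u * a) ^ 2" by (simp add: power2_eq_square)
      thus False using nt by blast
    next
      assume "v \<in> Q" thus False using v unfolding Q_def by auto
    qed
  qed
  have injm: "inj_on (\<lambda>x. u * x) Q" using u0 by (auto intro: inj_onI)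
  have "insert v ((\<lambda>x. u * x) ` Q \<union> Q) \<subseteq> UNIV - {0}"
    using u0 v unfolding Q_def by (auto; metis power_zero_numeral)
  hence "card (insert v ((\<lambda>x. u * x) ` Q \<union> Q)) \<le> card (UNIV - {0::'a})"
    by (intro card_mono) auto
  moreover have "card (insert v ((\<lambda>x. u * x) ` Q \<union> Q)) = 2 * card Q + 1"
    using vnot disj1 card_image[OF injm] by (simp add: card_Un_disjoint)
  ultimately show False using c1 by simp
qed

lemma circ_zero:
  fixes x y :: "'a :: {field,finite}" and p m k :: nat
  assumes "prime p" "odd p" "m > 0" "card (UNIV :: 'a set) = p ^ m"
    "odd (m div gcd m k)" "circ_k p k x y = 0"
  shows "x = 0 \<or> y = 0"
proof (rule ccontr)
  assume "\<not> (x = 0 \<or> y = 0)"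
  hence x0: "x \<noteq> 0" and y0: "y \<noteq> 0" by auto
  define z where "z = x / y"
  have "z ^ (p ^ k) + z = (x ^ (p ^ k) * y + y ^ (p ^ k) * x) / (y ^ (p ^ k) * y)"
    using y0 by (simp add: z_def power_divide field_simps)
  also have "\<dots> = 0" using assms(6) by (simp add: circ_k_def)
  finally have "z ^ (p ^ k) = - z" by (simp add: eq_neg_iff_add_eq_0)
  hence "z = 0" using L0[OF assms(1-5)] by blast
  thus False using x0 y0 by (simp add: z_def)
qed

lemma sq_div:
  fixes \<alpha> X Z :: "'a::field"
  assumes "\<alpha> * Z ^ 2 = X ^ 2" "Z \<noteq> 0"
  shows "\<alpha> = (X / Z) ^ 2"
  using assms by (simp add: power_divide eq_divide_eq)

theorem theorem1:
  fixes p m k :: nat and \<alpha> :: "'a::{field,finite}" and \<sigma> :: "'a \<Rightarrow> 'a"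
  assumes "prime p" and "odd p"
    and "m > 0" and "k > 0"
    and "card (UNIV :: 'a set) = p ^ m"
    and "odd (m div gcd m k)"
    and "\<not> (\<exists>y. \<alpha> = y ^ 2)"
    and "field_automorphism \<sigma>"
  shows "presemifield (star_mult p k \<alpha> \<sigma>)"
proof -
  note A = assms
  define q where "q = p ^ k"
  have qodd: "odd q" using assms(2) by (simp add: q_def)
  have ch: "CHAR('a) = p" by (rule char_eq[OF assms(1,3,5)])
  have fa: "(x + y) ^ q = x ^ q + y ^ q" for x y :: 'a
    unfolding q_def by (rule freshmans_dream') (use ch assms(1) in auto)
  have sa: "\<sigma> (x + y) = \<sigma> x + \<sigma> y" for x y using assms(8) by (simp add: field_automorphism_def)
  have sm: "\<sigma> (x * y) = \<sigma> x * \<sigma> y" for x y using assms(8) by (simp add: field_automorphism_def)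
  have sb: "bij \<sigma>" using assms(8) by (simp add: field_automorphism_def)
  have s0: "\<sigma> 0 = 0" using sa[of 0 0] by (metis add_0 add_cancel_right_right)
  have sneg: "\<sigma> (- x) = - \<sigma> x" for x using sa[of x "-x"] s0 by (simp add: eq_neg_iff_add_eq_0 add.commute)
  have sinj: "\<sigma> x = \<sigma> y \<Longrightarrow> x = y" for x y using sb by (simp add: bij_def inj_eq)
  have sz: "\<sigma> x = 0 \<Longrightarrow> x = 0" for x using sinj[of x 0] s0 by simp
  have spow: "\<sigma> (x ^ n) = \<sigma> x ^ n" for x n
  proof (induction n)
    case 0
    have "\<sigma> 1 \<noteq> 0" using sz[of 1] by auto
    moreover have "\<sigma> 1 * \<sigma> 1 = \<sigma> 1 * 1" using sm[of 1 1] by simp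
    ultimately show ?case using mult_left_cancel by simp
  qed (simp add: sm)
  have c1: "circ_k p k (x + y) z = circ_k p k x z + circ_k p k y z" for x y z :: 'a
    unfolding circ_k_def q_def[symmetric] by (simp add: fa algebra_simps)
  have c2: "circ_k p k z (x + y) = circ_k p k z x + circ_k p k z y" for x y z :: 'a
    unfolding circ_k_def q_def[symmetric] by (simp add: fa algebra_simps)
  have cz: "circ_k p k x y = 0 \<Longrightarrow> x = 0 \<or> y = 0" for x y :: 'a
    by (rule circ_zero[OF assms(1,2,3,5,6)])
  have c00: "circ_k p k x 0 = 0" "circ_k p k 0 x = 0" for x :: 'a
    using assms(4) prime_gt_0_nat[OF assms(1)] by (simp_all add: circ_k_def)
  have a0: "\<alpha> \<noteq> 0" using assms(7) by (metis power_zero_numeral)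
  have nz: "x = 0 \<or> y = 0" if h: "star_mult p k \<alpha> \<sigma> x y = 0" for x y
  proof -
    obtain a b where x: "x = (a, b)" by (cases x)
    obtain c d where y: "y = (c, d)" by (cases y)
    have E1: "circ_k p k a c + \<alpha> * \<sigma> (circ_k p k b d) = 0" and E2: "a * d + b * c = 0"
      using h by (simp_all add: x y star_mult_def zero_prod_def)
    show ?thesis
    proof (cases "a = 0")
      case True
      show ?thesis
      proof (cases "b = 0")
        case False
        hence "c = 0" using E2 True by simp
        hence "\<sigma> (circ_k p k b d) = 0" using E1 True c00 a0 by simp
        hence "d = 0" using sz cz False by blast
        thus ?thesis using \<open>c = 0\<close> y by (simp add: zero_prod_def)
      qed (simp add: x True zero_prod_def)
    next
      case an: False
      show ?thesis
      proof (cases "b = 0")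
        case True
        hence "d = 0" using E2 an by simp
        hence "circ_k p k a c = 0" using E1 True c00 s0 by simp
        hence "c = 0" using cz an by blast
        thus ?thesis using \<open>d = 0\<close> y by (simp add: zero_prod_def)
      next
        case bn: False
        define s where "s = c / a"
        have cs: "c = a * s" using an by (simp add: s_def)
        have "a * d = - (b * c)" using E2 by (simp add: eq_neg_iff_add_eq_0)
        also have "\<dots> = a * (- (b * s))" by (simp add: cs mult.left_commute)
        finally have ds: "d = - (b * s)" by (simp only: mult_left_cancel[OF an])
        show ?thesis
        proof (cases "s = 0")
          case True thus ?thesis using cs ds y by (simp add: zero_prod_def)
        next
          case sn: False
          define u where "u = s + s ^ q"
          have un: "u \<noteq> 0"
          proof
            assume "u = 0"
            hence "s ^ (p ^ k) = - s" by (simp add: u_def q_def eq_neg_iff_add_eq_0 add.commute)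
            thus False using L0[OF assms(1,2,3,5,6)] sn by blast
          qed
          have ca: "circ_k p k a c = a ^ q * a * u"
            unfolding circ_k_def q_def[symmetric] cs u_def power_mult_distrib by (simp add: ring_distribs mult_ac)
          have cb: "circ_k p k b d = - (b ^ q * b * u)"
            unfolding circ_k_def q_def[symmetric] ds u_def power_minus_odd[OF qodd] power_mult_distrib
            by (simp add: ring_distribs mult_ac)
          define r where "r = (q + 1) div 2"
          have qr: "q + 1 = 2 * r" using qodd unfolding r_def by presburger
          define AA where "AA = a ^ r"
          define BB where "BB = \<sigma> b ^ r"
          have AA2: "AA ^ 2 = a ^ q * a"
          proof -
            have "AA ^ 2 = a ^ (r * 2)" unfolding AA_def by (rule power_mult[symmetric])
            also have "r * 2 = Suc q" using qr by simp
            finally show ?thesis by simp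
          qed
          have BB2: "BB ^ 2 = \<sigma> b ^ q * \<sigma> b"
          proof -
            have "BB ^ 2 = \<sigma> b ^ (r * 2)" unfolding BB_def by (rule power_mult[symmetric])
            also have "r * 2 = Suc q" using qr by simp
            finally show ?thesis by simp
          qed
          have Bn: "BB \<noteq> 0" using bn sz by (auto simp: BB_def)
          have sun: "\<sigma> u \<noteq> 0" using un sz by blast
          have "\<sigma> (circ_k p k b d) = - (\<sigma> b ^ q * \<sigma> b * \<sigma> u)"
            unfolding cb by (simp add: sneg sm spow)
          hence "a ^ q * a * u + \<alpha> * (- (\<sigma> b ^ q * \<sigma> b * \<sigma> u)) = 0"
            using E1 ca by simp
          hence key: "AA ^ 2 * u = \<alpha> * BB ^ 2 * \<sigma> u"
            unfolding AA2 BB2 by (simp add: algebra_simps)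
          have "\<exists>y. \<alpha> = y ^ 2"
          proof (cases "\<exists>w. u = w ^ 2")
            case True
            then obtain w where w: "u = w ^ 2" by blast
            have wn: "\<sigma> w \<noteq> 0" using w un sz by auto
            have su: "\<sigma> u = \<sigma> w ^ 2" using w spow by simp
            have "\<alpha> * (BB * \<sigma> w) ^ 2 = \<alpha> * BB ^ 2 * \<sigma> u"
              by (simp add: su power_mult_distrib mult.assoc)
            also have "\<dots> = AA ^ 2 * u" using key by simp
            also have "\<dots> = (AA * w) ^ 2" by (simp add: w power_mult_distrib)
            finally have "\<alpha> = (AA * w / (BB * \<sigma> w)) ^ 2"
              by (rule sq_div) (use Bn wn in simp)
            thus ?thesis by blast
          next
            case False
            have "\<not> (\<exists>w. \<sigma> u = w ^ 2)"
            proof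
              assume "\<exists>w. \<sigma> u = w ^ 2"
              then obtain w where w: "\<sigma> u = w ^ 2" by blast
              obtain w' where "w = \<sigma> w'" using sb by (metis bij_pointE)
              hence "\<sigma> u = \<sigma> (w' ^ 2)" using w spow by simp
              hence "u = w' ^ 2" by (rule sinj)
              thus False using False by blast
            qed
            then obtain t where t: "u * \<sigma> u = t ^ 2" using nonsq_mult False by blast
            have "\<alpha> * (BB * \<sigma> u) ^ 2 = (\<alpha> * BB ^ 2 * \<sigma> u) * \<sigma> u"
              by (simp add: power_mult_distrib power2_eq_square mult.assoc)
            also have "\<dots> = AA ^ 2 * (u * \<sigma> u)" using key by (simp add: mult.assoc)
            also have "\<dots> = (AA * t) ^ 2" by (simp add: t power_mult_distrib)
            finally have "\<alpha> = (AA * t / (BB * \<sigma> u)) ^ 2"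
              by (rule sq_div) (use Bn sun in simp)
            thus ?thesis by blast
          qed
          thus ?thesis using assms(7) by blast
        qed
      qed
    qed
  qed
  show ?thesis
    unfolding presemifield_def
  proof (intro conjI allI impI)
    show "finite (UNIV :: ('a \<times> 'a) set)" by simp
  next
    fix x y z :: "'a \<times> 'a"
    show "star_mult p k \<alpha> \<sigma> (x + y) z = star_mult p k \<alpha> \<sigma> x z + star_mult p k \<alpha> \<sigma> y z"
    proof -
      obtain a1 a2 where x: "x = (a1, a2)" by (cases x)
      obtain b1 b2 where y: "y = (b1, b2)" by (cases y)
      obtain e1 e2 where z: "z = (e1, e2)" by (cases z)
      have "circ_k p k (a1 + b1) e1 + \<alpha> * \<sigma> (circ_k p k (a2 + b2) e2) =
        (circ_k p k a1 e1 + \<alpha> * \<sigma> (circ_k p k a2 e2)) + (circ_k p k b1 e1 + \<alpha> * \<sigma> (circ_k p k b2 e2))"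
        unfolding c1 sa distrib_left by (simp only: add_ac)
      moreover have "(a1 + b1) * e2 + (a2 + b2) * e1 = (a1 * e2 + a2 * e1) + (b1 * e2 + b2 * e1)"
        by (simp only: distrib_right add_ac)
      ultimately show ?thesis by (simp add: x y z star_mult_def)
    qed
    show "star_mult p k \<alpha> \<sigma> x (y + z) = star_mult p k \<alpha> \<sigma> x y + star_mult p k \<alpha> \<sigma> x z"
    proof -
      obtain a1 a2 where x: "x = (a1, a2)" by (cases x)
      obtain b1 b2 where y: "y = (b1, b2)" by (cases y)
      obtain e1 e2 where z: "z = (e1, e2)" by (cases z)
      have "circ_k p k a1 (b1 + e1) + \<alpha> * \<sigma> (circ_k p k a2 (b2 + e2)) =
        (circ_k p k a1 b1 + \<alpha> * \<sigma> (circ_k p k a2 b2)) + (circ_k p k a1 e1 + \<alpha> * \<sigma> (circ_k p k a2 e2))"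
        unfolding c2 sa distrib_left by (simp only: add_ac)
      moreover have "a1 * (b2 + e2) + a2 * (b1 + e1) = (a1 * b2 + a2 * b1) + (a1 * e2 + a2 * e1)"
        by (simp only: distrib_left add_ac)
      ultimately show ?thesis by (simp add: x y z star_mult_def)
    qed
  next
    fix x y assume "star_mult p k \<alpha> \<sigma> x y = 0"
    thus "x = 0 \<or> y = 0" by (rule nz)
  qed
qed

end
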